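(* Let $\Omega\subset\mathbb{R}^d$ be a compact domain with smooth boundary and outward normal $\mathbf{n}$, and let $\mu,\nu\in\mathcal{P}(\Omega)$ have $C^1$ densities (also denoted $\mu(x),\nu(x)$, with $\mu>0$). Let $\chi$ be a $C^1$ vector field on $\Omega$ with $\mathrm{div}\,\chi=0$ in $\Omega$ and $\chi\cdot\mathbf{n}=0$ on $\partial\Omega$. Let $s:\Omega\times[0,\infty)\to\Omega$ be differentiable, with $s(\cdot,0)=\mathrm{Id}$, $\frac{\partial s}{\partial t}(x,t)=\frac{1}{\mu(s(x,t))}\chi(s(x,t))$, and for each $t$ invertible in $x$ with inverse $s^{-1}(\cdot,t)$ (i.e. $s^{-1}(s(x,t),t)=x=s(s^{-1}(x,t),t)$), and assume $[s(\cdot,t)]_*\mu=\mu$ for all $t$. Let $T^0:\Omega\to\Omega$ satisfy $T^0_*\mu=\nu$ and set $T^t:=T^0\circ s^{-1}(\cdot,t)$. Let $f\in C^1(\Omega;\mathbb{R}^m)$, $g\in \mathrm{L}^2(\nu;\mathbb{R}^m)$, and $$\varepsilon(T)=\int_\Omega\big(|T(x)-x|_2^2+|g(T(x))-f(x)|_2^2\big)\mu(x)\,\mathrm{d}x.$$ Assuming enough integrability to differentiate under the integral sign, $$\frac{\mathrm{d}}{\mathrm{d}t}\varepsilon(T^t)=-\int_\Omega Q(x,t)\cdot\chi(x)\,\mathrm{d}x,\qquad Q(x,t)=2T^t(x)+2\sum_{i=1}^m g_i(T^t(x))\,\nabla f_i(x).$$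
   Context: $|z|_2$ is the Euclidean norm; $T_*\mu(A)=\mu(T^{-1}(A))$ denotes pushforward; $g_i,f_i$ are the components of $g,f$. *)

theory Defs
  imports "HOL-Analysis.Analysis" "HOL-Probability.Probability"
begin

text \<open>C^k regularity on a set U (intended: U open), via iterated partial derivatives
  along the standard basis. C^{k+1} = differentiable with all first partials C^k.\<close>
fun Ck_on :: "nat \<Rightarrow> 'a::euclidean_space set \<Rightarrow> ('a \<Rightarrow> 'b::real_normed_vector) \<Rightarrow> bool" where
  "Ck_on 0 U f = continuous_on U f"
| "Ck_on (Suc k) U f =
     ((\<forall>x\<in>U. f differentiable (at x)) \<and>
      (\<forall>b\<in>Basis. Ck_on k U (\<lambda>x. frechet_derivative f (at x) b)))"

definition smooth_on :: "'a::euclidean_space set \<Rightarrow> ('a \<Rightarrow> 'b::real_normed_vector) \<Rightarrow> bool" where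
  "smooth_on U f \<longleftrightarrow> (\<forall>k. Ck_on k U f)"

text \<open>C^1 up to the boundary of a (closed) set S: C^1 on some open neighbourhood of S.\<close>
definition C1_on :: "'a::euclidean_space set \<Rightarrow> ('a \<Rightarrow> 'b::real_normed_vector) \<Rightarrow> bool" where
  "C1_on S f \<longleftrightarrow> (\<exists>U. open U \<and> S \<subseteq> U \<and> Ck_on 1 U f)"

definition grad :: "('a::euclidean_space \<Rightarrow> real) \<Rightarrow> 'a \<Rightarrow> 'a" where
  "grad \<phi> x = (\<Sum>b\<in>Basis. frechet_derivative \<phi> (at x) b *\<^sub>R b)"

definition divergence :: "('a::euclidean_space \<Rightarrow> 'a) \<Rightarrow> 'a \<Rightarrow> real" where
  "divergence F x = (\<Sum>b\<in>Basis. frechet_derivative F (at x) b \<bullet> b)"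

definition local_defining_fn :: "'a::euclidean_space set \<Rightarrow> 'a set \<Rightarrow> ('a \<Rightarrow> real) \<Rightarrow> bool" where
  "local_defining_fn \<Omega> U \<rho> \<longleftrightarrow> open U \<and> smooth_on U \<rho> \<and> (\<forall>y\<in>U. grad \<rho> y \<noteq> 0)
      \<and> \<Omega> \<inter> U = {y\<in>U. \<rho> y \<le> 0}"

definition compact_smooth_domain :: "'a::euclidean_space set \<Rightarrow> bool" where
  "compact_smooth_domain \<Omega> \<longleftrightarrow> compact \<Omega> \<and> interior \<Omega> \<noteq> {} \<and> connected (interior \<Omega>)
      \<and> \<Omega> = closure (interior \<Omega>)
      \<and> (\<forall>x\<in>frontier \<Omega>. \<exists>U \<rho>. x \<in> U \<and> local_defining_fn \<Omega> U \<rho>)"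

definition outward_normal :: "'a::euclidean_space set \<Rightarrow> 'a \<Rightarrow> 'a" where
  "outward_normal \<Omega> x = (SOME n. \<exists>U \<rho>. x \<in> U \<and> local_defining_fn \<Omega> U \<rho>
        \<and> n = (1 / norm (grad \<rho> x)) *\<^sub>R grad \<rho> x)"

definition dens_measure :: "'a::euclidean_space set \<Rightarrow> ('a \<Rightarrow> real) \<Rightarrow> 'a measure" where
  "dens_measure \<Omega> d = density (restrict_space lborel \<Omega>) (\<lambda>x. ennreal (d x))"

definition energy :: "'a::euclidean_space set \<Rightarrow> ('a \<Rightarrow> real) \<Rightarrow> ('a \<Rightarrow> real^'m)
     \<Rightarrow> ('a \<Rightarrow> real^'m) \<Rightarrow> ('a \<Rightarrow> 'a) \<Rightarrow> real" where
  "energy \<Omega> \<mu> f g T = set_lebesgue_integral lborel \<Omega>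
      (\<lambda>x. ((norm (T x - x))\<^sup>2 + (norm (g (T x) - f x))\<^sup>2) * \<mu> x)"

end

theory Submission
  imports Defs
begin


lemma deriv_under_integral:
  fixes M :: "'b measure" and F :: "'b \<Rightarrow> real \<Rightarrow> real"
  assumes intF: "\<And>\<tau>. \<tau> \<ge> 0 \<Longrightarrow> integrable M (\<lambda>y. F y \<tau>)"
    and der: "\<And>y \<tau>. y \<in> space M \<Longrightarrow> \<tau> \<ge> 0 \<Longrightarrow> ((F y) has_real_derivative F' y \<tau>) (at \<tau> within {0..})"
    and bnd: "\<And>y \<tau>. y \<in> space M \<Longrightarrow> \<tau> \<ge> 0 \<Longrightarrow> \<bar>F' y \<tau>\<bar> \<le> G y"
    and intG: "integrable M G"
    and measF': "(\<lambda>y. F' y t) \<in> borel_measurable M"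
    and t: "t \<ge> 0"
  shows "((\<lambda>\<tau>. \<integral>y. F y \<tau> \<partial>M) has_real_derivative (\<integral>y. F' y t \<partial>M)) (at t within {0..})"
proof -
  have mvt: "\<bar>F y \<tau> - F y t\<bar> \<le> G y * \<bar>\<tau> - t\<bar>" if y: "y \<in> space M" and tau: "\<tau> \<ge> 0" for y \<tau>
  proof -
    have "norm (F y \<tau> - F y t) \<le> G y * norm (\<tau> - t)"
      by (rule field_differentiable_bound[of "{0::real..}" "F y" "F' y"])
         (use der[OF y] bnd[OF y] tau t in auto)
    then show ?thesis by simp
  qed
  show ?thesis
    unfolding has_field_derivative_iff
  proof (rule Lim_within_LIMSEQ, intro allI impI)
    fix X :: "nat \<Rightarrow> real"
    assume X: "(\<forall>n. X n \<noteq> t \<and> X n \<in> {0..}) \<and> X \<longlonglongrightarrow> t"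
    have eq: "((\<integral>y. F y (X n) \<partial>M) - (\<integral>y. F y t \<partial>M)) / (X n - t)
        = (\<integral>y. (F y (X n) - F y t) / (X n - t) \<partial>M)" for n
      using X intF t by (simp add: Bochner_Integration.integral_diff)
    have "(\<lambda>n. \<integral>y. (F y (X n) - F y t) / (X n - t) \<partial>M) \<longlonglongrightarrow> (\<integral>y. F' y t \<partial>M)"
    proof (rule integral_dominated_convergence[where w=G])
      show "(\<lambda>y. F' y t) \<in> borel_measurable M" by (rule measF')
      show "(\<lambda>y. (F y (X n) - F y t) / (X n - t)) \<in> borel_measurable M" for n
      proof -
        have [measurable]: "(\<lambda>y. F y (X n)) \<in> borel_measurable M" using intF[of "X n"] X by auto
        have [measurable]: "(\<lambda>y. F y t) \<in> borel_measurable M" using intF[OF t] by auto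
        show ?thesis by measurable
      qed
      show "integrable M G" by (rule intG)
      show "AE y in M. (\<lambda>n. (F y (X n) - F y t) / (X n - t)) \<longlonglongrightarrow> F' y t"
      proof (rule AE_I2)
        fix y assume y: "y \<in> space M"
        have "((\<lambda>\<tau>. (F y \<tau> - F y t) / (\<tau> - t)) \<longlongrightarrow> F' y t) (at t within {0..})"
          using der[OF y t] unfolding has_field_derivative_iff .
        then show "(\<lambda>n. (F y (X n) - F y t) / (X n - t)) \<longlonglongrightarrow> F' y t"
          using X unfolding tendsto_at_iff_sequentially comp_def by auto
      qed
      show "AE y in M. norm ((F y (X n) - F y t) / (X n - t)) \<le> G y" for n
      proof (rule AE_I2)
        fix y assume y: "y \<in> space M"
        have "X n - t \<noteq> 0" using X by auto
        then have "\<bar>X n - t\<bar> > 0" by simp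
        moreover have "\<bar>F y (X n) - F y t\<bar> \<le> G y * \<bar>X n - t\<bar>" using mvt[OF y] X by auto
        ultimately show "norm ((F y (X n) - F y t) / (X n - t)) \<le> G y"
          by (simp add: abs_divide divide_le_eq)
      qed
    qed
    then show "(\<lambda>n. ((\<integral>y. F y (X n) \<partial>M) - (\<integral>y. F y t \<partial>M)) / (X n - t)) \<longlonglongrightarrow> (\<integral>y. F' y t \<partial>M)"
      by (simp only: eq)
  qed
qed



lemma cont_meas:
  fixes h :: "'a::euclidean_space \<Rightarrow> 'b::topological_space"
  assumes "continuous_on S h"
  shows "h \<in> borel_measurable (restrict_space lborel S)"
proof -
  have "h \<in> borel_measurable (restrict_space borel S)"
    by (rule borel_measurable_continuous_on_restrict[OF assms])
  moreover have "sets (restrict_space lborel S) = sets (restrict_space borel S)"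
    by (rule sets_restrict_space_cong) simp
  ultimately show ?thesis using measurable_cong_sets by blast
qed

lemma cont_meas2:
  fixes h :: "'a::euclidean_space \<Rightarrow> 'a"
  assumes "continuous_on S h" "h \<in> S \<rightarrow> S"
  shows "h \<in> measurable (restrict_space lborel S) (restrict_space lborel S)"
proof (rule measurable_restrict_space2)
  show "h \<in> space (restrict_space lborel S) \<rightarrow> S" using assms(2) by (simp add: space_restrict_space)
  have "h \<in> borel_measurable (restrict_space lborel S)" by (rule cont_meas[OF assms(1)])
  then show "h \<in> measurable (restrict_space lborel S) lborel"
    using measurable_cong_sets[of "restrict_space lborel S" "restrict_space lborel S" lborel borel] by simp
qed

lemma sets_dens: "sets (dens_measure S d) = sets (restrict_space lborel S)"
  by (simp add: dens_measure_def)

lemma space_dens: "space (dens_measure S d) = S"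
  by (simp add: dens_measure_def space_restrict_space)

lemma C1_onD:
  assumes "C1_on S h"
  shows "\<exists>U. open U \<and> S \<subseteq> U \<and> (\<forall>x\<in>U. h differentiable (at x))
     \<and> (\<forall>b\<in>Basis. continuous_on U (\<lambda>x. frechet_derivative h (at x) b))"
  using assms by (simp add: C1_on_def One_nat_def)

lemma C1_cont:
  assumes "C1_on S h"
  shows "continuous_on S h"
proof -
  obtain U where U: "open U" "S \<subseteq> U" "\<forall>x\<in>U. h differentiable (at x)"
    using C1_onD[OF assms] by blast
  have "continuous_on U h"
    by (metis U(3) continuous_at_imp_continuous_on differentiable_imp_continuous_within)
  then show ?thesis using U(2) continuous_on_subset by blast
qed

lemma hvd_inner_const:
  assumes "(h has_vector_derivative v) F"
  shows "((\<lambda>\<tau>. c \<bullet> h \<tau>) has_real_derivative (c \<bullet> v)) F"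
proof -
  have "(h has_derivative (\<lambda>x. x *\<^sub>R v)) F" using assms by (simp add: has_vector_derivative_def)
  then have "((\<lambda>\<tau>. c \<bullet> h \<tau>) has_derivative (\<lambda>x. c \<bullet> (x *\<^sub>R v))) F"
    by (rule has_derivative_inner_right)
  moreover have "(\<lambda>x. c \<bullet> (x *\<^sub>R v)) = (*) (c \<bullet> v)" by (auto simp: mult.commute)
  ultimately show ?thesis by (simp add: has_field_derivative_def)
qed

lemma norm_diff_sq:
  fixes u v :: "'a::real_inner"
  shows "(norm (u - v))\<^sup>2 = (norm u)\<^sup>2 - 2 * (u \<bullet> v) + (norm v)\<^sup>2"
  by (simp add: power2_norm_eq_inner inner_diff_left inner_diff_right inner_commute)

lemma bounded_on_compact:
  fixes h :: "'a::metric_space \<Rightarrow> 'b::real_normed_vector"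
  assumes "continuous_on S h" "compact S"
  shows "\<exists>B\<ge>0. \<forall>x\<in>S. norm (h x) \<le> B"
proof -
  have "bounded (h ` S)" using compact_continuous_image[OF assms(1,2)] compact_imp_bounded by blast
  then obtain B where "\<forall>y\<in>h ` S. norm y \<le> B" by (auto simp: bounded_iff)
  then show ?thesis by (intro exI[of _ "max B 0"]) auto
qed



lemma meas_M: "h \<in> borel_measurable (restrict_space lborel S) \<Longrightarrow> h \<in> borel_measurable (dens_measure S d)"
  by (simp add: measurable_cong_sets[OF sets_dens[of S d] refl])

lemma meas_MM: "h \<in> measurable (restrict_space lborel S) (restrict_space lborel S)
   \<Longrightarrow> h \<in> measurable (dens_measure S d) (dens_measure S d')"
  by (simp add: measurable_cong_sets[OF sets_dens[of S d] sets_dens[of S d']])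

lemma meas_RR: "h \<in> measurable (dens_measure S d) (dens_measure S d')
   \<Longrightarrow> h \<in> measurable (restrict_space lborel S) (restrict_space lborel S)"
  by (simp add: measurable_cong_sets[OF sets_dens[of S d] sets_dens[of S d']])

lemma meas_R: "h \<in> borel_measurable (dens_measure S d) \<Longrightarrow> h \<in> borel_measurable (restrict_space lborel S)"
  by (simp add: measurable_cong_sets[OF sets_dens[of S d] refl])

lemma set_int_dens:
  fixes h d :: "'a::euclidean_space \<Rightarrow> real"
  assumes S: "S \<in> sets lborel"
    and hm: "h \<in> borel_measurable (restrict_space lborel S)"
    and dm: "d \<in> borel_measurable (restrict_space lborel S)"
    and dpos: "\<forall>x\<in>S. 0 \<le> d x"
  shows "set_lebesgue_integral lborel S (\<lambda>x. h x * d x) = integral\<^sup>L (dens_measure S d) h"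
proof -
  have "set_lebesgue_integral lborel S (\<lambda>x. h x * d x)
      = integral\<^sup>L (restrict_space lborel S) (\<lambda>x. h x * d x)"
    using S by (simp add: set_lebesgue_integral_def integral_restrict_space)
  also have "\<dots> = integral\<^sup>L (restrict_space lborel S) (\<lambda>x. d x *\<^sub>R h x)"
    by (simp add: mult.commute)
  also have "\<dots> = integral\<^sup>L (dens_measure S d) h"
    unfolding dens_measure_def
    by (rule integral_density[symmetric, OF hm dm]) (use dpos in \<open>auto simp: space_restrict_space\<close>)
  finally show ?thesis .
qed

lemma int_push:
  fixes h :: "'a \<Rightarrow> real"
  assumes "distr M M \<phi> = M" "\<phi> \<in> measurable M M" "h \<in> borel_measurable M"
  shows "integral\<^sup>L M h = integral\<^sup>L M (\<lambda>x. h (\<phi> x))"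
  using integral_distr[OF assms(2,3)] assms(1) by simp

lemma vec_sum_nth: "(\<Sum>b\<in>S. h b) $ i = (\<Sum>b\<in>S. h b $ i)"
  by (induct S rule: infinite_finite_induct) auto


theorem mainTheorem6:
  fixes \<Omega> :: "'a::euclidean_space set"
    and \<mu> \<nu> :: "'a \<Rightarrow> real"
    and \<xi> :: "'a \<Rightarrow> 'a"
    and s sinv :: "'a \<Rightarrow> real \<Rightarrow> 'a"
    and T0 :: "'a \<Rightarrow> 'a"
    and f g :: "'a \<Rightarrow> real^'m"
  assumes dom: "compact_smooth_domain \<Omega>"
    and mu_C1: "C1_on \<Omega> \<mu>" and mu_pos: "\<forall>x\<in>\<Omega>. \<mu> x > 0"
    and mu_prob: "prob_space (dens_measure \<Omega> \<mu>)"
    and nu_C1: "C1_on \<Omega> \<nu>" and nu_nonneg: "\<forall>x\<in>\<Omega>. \<nu> x \<ge> 0"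
    and nu_prob: "prob_space (dens_measure \<Omega> \<nu>)"
    and chi_C1: "C1_on \<Omega> \<xi>"
    and chi_div: "\<forall>x\<in>\<Omega>. divergence \<xi> x = 0"
    and chi_bdry: "\<forall>x\<in>frontier \<Omega>. \<xi> x \<bullet> outward_normal \<Omega> x = 0"
    and s_maps: "\<forall>x\<in>\<Omega>. \<forall>t\<ge>0. s x t \<in> \<Omega>"
    and s_diff: "\<forall>x\<in>\<Omega>. \<forall>t\<ge>0.
        (\<lambda>p. s (fst p) (snd p)) differentiable (at (x, t) within \<Omega> \<times> {0..})"
    and s_init: "\<forall>x\<in>\<Omega>. s x 0 = x"
    and s_ode: "\<forall>x\<in>\<Omega>. \<forall>t\<ge>0. ((\<lambda>\<tau>. s x \<tau>) has_vector_derivative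
        (1 / \<mu> (s x t)) *\<^sub>R \<xi> (s x t)) (at t within {0..})"
    and sinv_maps: "\<forall>x\<in>\<Omega>. \<forall>t\<ge>0. sinv x t \<in> \<Omega>"
    and sinv_left: "\<forall>x\<in>\<Omega>. \<forall>t\<ge>0. sinv (s x t) t = x"
    and sinv_right: "\<forall>x\<in>\<Omega>. \<forall>t\<ge>0. s (sinv x t) t = x"
    and s_push: "\<forall>t\<ge>0. distr (dens_measure \<Omega> \<mu>) (dens_measure \<Omega> \<mu>) (\<lambda>x. s x t)
        = dens_measure \<Omega> \<mu>"
    and T0_maps: "T0 \<in> \<Omega> \<rightarrow> \<Omega>"
    and T0_meas: "T0 \<in> measurable (dens_measure \<Omega> \<mu>) (dens_measure \<Omega> \<nu>)"
    and T0_push: "distr (dens_measure \<Omega> \<mu>) (dens_measure \<Omega> \<nu>) T0 = dens_measure \<Omega> \<nu>"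
    and f_C1: "C1_on \<Omega> f"
    and g_meas: "g \<in> borel_measurable (dens_measure \<Omega> \<nu>)"
    and g_L2: "integrable (dens_measure \<Omega> \<nu>) (\<lambda>y. (norm (g y))\<^sup>2)"
    and t_nonneg: "t \<ge> 0"
  shows "((\<lambda>\<tau>. energy \<Omega> \<mu> f g (\<lambda>x. T0 (sinv x \<tau>))) has_real_derivative
      - set_lebesgue_integral lborel \<Omega>
          (\<lambda>x. (2 *\<^sub>R T0 (sinv x t)
                + 2 *\<^sub>R (\<Sum>i\<in>UNIV. (g (T0 (sinv x t)) $ i) *\<^sub>R grad (\<lambda>y. f y $ i) x)) \<bullet> \<xi> x))
     (at t within {0..})"
proof -
  define R where "R = restrict_space lborel \<Omega>"
  define M where "M = dens_measure \<Omega> \<mu>"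
  have cpt: "compact \<Omega>" using dom by (simp add: compact_smooth_domain_def)
  have Om_sets: "\<Omega> \<in> sets lborel" using compact_imp_closed[OF cpt] by simp
  have spM: "space M = \<Omega>" by (simp add: M_def space_dens)
  interpret P: prob_space M using mu_prob by (simp add: M_def)
  have mu_cont: "continuous_on \<Omega> \<mu>" by (rule C1_cont[OF mu_C1])
  have chi_cont: "continuous_on \<Omega> \<xi>" by (rule C1_cont[OF chi_C1])
  have f_cont: "continuous_on \<Omega> f" by (rule C1_cont[OF f_C1])
  obtain Uf where Uf: "open Uf" "\<Omega> \<subseteq> Uf" "\<forall>x\<in>Uf. f differentiable (at x)"
     "\<forall>b\<in>Basis. continuous_on Uf (\<lambda>x. frechet_derivative f (at x) b)"
    using C1_onD[OF f_C1] by blast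
  define Df where "Df x = frechet_derivative f (at x)" for x
  have hasDf: "(f has_derivative Df x) (at x)" if "x \<in> \<Omega>" for x
    using Uf that frechet_derivative_works unfolding Df_def by blast
  have linDf: "linear (Df x)" if "x \<in> \<Omega>" for x
    using hasDf[OF that] has_derivative_linear by blast
  have repDf: "Df x u = (\<Sum>b\<in>Basis. (u \<bullet> b) *\<^sub>R Df x b)" if "x \<in> \<Omega>" for x u
  proof -
    have "Df x u = Df x (\<Sum>b\<in>Basis. (u \<bullet> b) *\<^sub>R b)" by (simp add: euclidean_representation)
    also have "\<dots> = (\<Sum>b\<in>Basis. (u \<bullet> b) *\<^sub>R Df x b)"
      by (simp add: linear_sum[OF linDf[OF that]] linear_cmul[OF linDf[OF that]])
    finally show ?thesis .
  qed
  have contDfb: "continuous_on \<Omega> (\<lambda>x. Df x b)" if "b \<in> Basis" for b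
    using Uf(4) that Uf(2) continuous_on_subset unfolding Df_def by blast
  have "\<forall>b\<in>Basis. \<exists>K\<ge>0. \<forall>x\<in>\<Omega>. norm (Df x b) \<le> K"
    using bounded_on_compact[OF contDfb cpt] by blast
  then obtain K where K: "\<And>b. b \<in> Basis \<Longrightarrow> K b \<ge> 0 \<and> (\<forall>x\<in>\<Omega>. norm (Df x b) \<le> K b)"
    by metis
  define Cd where "Cd = (\<Sum>b\<in>Basis. K b)"
  have Cd_nonneg: "Cd \<ge> 0" unfolding Cd_def using K by (simp add: sum_nonneg)
  have Cd_bnd: "norm (Df x u) \<le> Cd * norm u" if "x \<in> \<Omega>" for x u
  proof -
    have "norm (Df x u) \<le> (\<Sum>b\<in>Basis. norm ((u \<bullet> b) *\<^sub>R Df x b))"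
      by (subst repDf[OF that]) (rule norm_sum)
    also have "\<dots> \<le> (\<Sum>b\<in>Basis. norm u * K b)"
    proof (rule sum_mono)
      fix b :: 'a assume b: "b \<in> Basis"
      have "norm ((u \<bullet> b) *\<^sub>R Df x b) = \<bar>u \<bullet> b\<bar> * norm (Df x b)" by simp
      also have "\<dots> \<le> norm u * K b"
        using Basis_le_norm[OF b, of u] K[OF b] that by (intro mult_mono) auto
      finally show "norm ((u \<bullet> b) *\<^sub>R Df x b) \<le> norm u * K b" .
    qed
    also have "\<dots> = Cd * norm u" by (simp add: Cd_def sum_distrib_left mult.commute)
    finally show ?thesis .
  qed
  have contDfw: "continuous_on \<Omega> (\<lambda>x. Df x (w x))" if "continuous_on \<Omega> w" for w
  proof -
    have "continuous_on \<Omega> (\<lambda>x. \<Sum>b\<in>Basis. (w x \<bullet> b) *\<^sub>R Df x b)"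
      by (intro continuous_intros that contDfb)
    moreover have "\<And>x. x \<in> \<Omega> \<Longrightarrow> (\<Sum>b\<in>Basis. (w x \<bullet> b) *\<^sub>R Df x b) = Df x (w x)"
      using repDf by metis
    ultimately show ?thesis using continuous_on_cong by force
  qed
  define V where "V x = (1 / \<mu> x) *\<^sub>R \<xi> x" for x
  have V_cont: "continuous_on \<Omega> V"
    unfolding V_def using mu_pos by (intro continuous_intros mu_cont chi_cont) auto
  obtain Cv where Cv: "Cv \<ge> 0" "\<forall>x\<in>\<Omega>. norm (V x) \<le> Cv"
    using bounded_on_compact[OF V_cont cpt] by blast
  obtain BO where BO: "BO \<ge> 0" "\<forall>x\<in>\<Omega>. norm x \<le> BO"
    using bounded_on_compact[OF continuous_on_id cpt] by auto
  obtain Bf where Bf: "Bf \<ge> 0" "\<forall>x\<in>\<Omega>. norm (f x) \<le> Bf"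
    using bounded_on_compact[OF f_cont cpt] by blast
  define W where "W x = Df x (V x)" for x
  have W_cont: "continuous_on \<Omega> W" unfolding W_def by (rule contDfw[OF V_cont])
  have W_bnd: "norm (W x) \<le> Cd * Cv" if "x \<in> \<Omega>" for x
  proof -
    have "norm (W x) \<le> Cd * norm (V x)" unfolding W_def by (rule Cd_bnd[OF that])
    also have "\<dots> \<le> Cd * Cv" using Cv that Cd_nonneg by (intro mult_left_mono) auto
    finally show ?thesis .
  qed
  have s_cont: "continuous_on \<Omega> (\<lambda>x. s x \<tau>)" if "\<tau> \<ge> 0" for \<tau>
  proof -
    have c2: "continuous_on (\<Omega> \<times> {0..}) (\<lambda>p. s (fst p) (snd p))"
      unfolding continuous_on_eq_continuous_within
      using s_diff differentiable_imp_continuous_within by fastforce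
    have "continuous_on \<Omega> (\<lambda>x. (\<lambda>p. s (fst p) (snd p)) (x, \<tau>))"
      by (rule continuous_on_compose2[OF c2]) (use that in \<open>auto intro!: continuous_intros\<close>)
    then show ?thesis by simp
  qed
  have sinv_cont: "continuous_on \<Omega> (\<lambda>x. sinv x \<tau>)" if "\<tau> \<ge> 0" for \<tau>
  proof -
    have img: "(\<lambda>x. s x \<tau>) ` \<Omega> = \<Omega>"
    proof
      show "(\<lambda>x. s x \<tau>) ` \<Omega> \<subseteq> \<Omega>" using s_maps that by auto
      show "\<Omega> \<subseteq> (\<lambda>x. s x \<tau>) ` \<Omega>"
      proof
        fix x assume "x \<in> \<Omega>"
        then have "x = s (sinv x \<tau>) \<tau>" "sinv x \<tau> \<in> \<Omega>" using sinv_right sinv_maps that by auto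
        then show "x \<in> (\<lambda>x. s x \<tau>) ` \<Omega>" by blast
      qed
    qed
    have "continuous_on ((\<lambda>x. s x \<tau>) ` \<Omega>) (\<lambda>x. sinv x \<tau>)"
      by (rule continuous_on_inv[OF s_cont[OF that] cpt]) (use sinv_left that in auto)
    then show ?thesis using img by simp
  qed

  have T0R[measurable]: "T0 \<in> measurable R R" using meas_RR[OF T0_meas] unfolding R_def .
  have gR[measurable]: "g \<in> borel_measurable R" using meas_R[OF g_meas] unfolding R_def .
  have fR[measurable]: "f \<in> borel_measurable R" unfolding R_def by (rule cont_meas[OF f_cont])
  have muR[measurable]: "\<mu> \<in> borel_measurable R" unfolding R_def by (rule cont_meas[OF mu_cont])
  have xiR[measurable]: "\<xi> \<in> borel_measurable R" unfolding R_def by (rule cont_meas[OF chi_cont])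
  have VR[measurable]: "V \<in> borel_measurable R" unfolding R_def by (rule cont_meas[OF V_cont])
  have WR[measurable]: "W \<in> borel_measurable R" unfolding R_def by (rule cont_meas[OF W_cont])
  have Df_xi_cont: "continuous_on \<Omega> (\<lambda>x. Df x (\<xi> x))" by (rule contDfw[OF chi_cont])
  have DxiR[measurable]: "(\<lambda>x. Df x (\<xi> x)) \<in> borel_measurable R"
    unfolding R_def by (rule cont_meas[OF Df_xi_cont])
  have sR: "(\<lambda>x. s x \<tau>) \<in> measurable R R" if "\<tau> \<ge> 0" for \<tau>
    unfolding R_def by (rule cont_meas2[OF s_cont[OF that]]) (use s_maps that in auto)
  have sinvR: "(\<lambda>x. sinv x \<tau>) \<in> measurable R R" if "\<tau> \<ge> 0" for \<tau>
    unfolding R_def by (rule cont_meas2[OF sinv_cont[OF that]]) (use sinv_maps that in auto)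
  have toM: "h \<in> borel_measurable M" if "h \<in> borel_measurable R" for h :: "'a \<Rightarrow> real"
    using meas_M that unfolding R_def M_def by blast
  have toMM: "h \<in> measurable M M" if "h \<in> measurable R R" for h
    using meas_MM that unfolding R_def M_def by blast
  have idR[measurable]: "(\<lambda>x. x) \<in> borel_measurable R" unfolding R_def by (rule cont_meas[OF continuous_on_id])
  have nfR[measurable]: "(\<lambda>x. (norm (f x))\<^sup>2) \<in> borel_measurable R" unfolding R_def
    by (rule cont_meas) (intro continuous_intros f_cont)
  have spR: "space R = \<Omega>" by (simp add: R_def space_restrict_space)
  define N where "N = dens_measure \<Omega> \<nu>"
  have gN[measurable]: "g \<in> borel_measurable N" using g_meas unfolding N_def .
  have T0N[measurable]: "T0 \<in> measurable M N" using T0_meas unfolding N_def M_def .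
  have ig2: "integrable M (\<lambda>y. (norm (g (T0 y)))\<^sup>2)"
  proof -
    have "integrable (distr M N T0) (\<lambda>y. (norm (g y))\<^sup>2)"
      using T0_push g_L2 unfolding N_def M_def by simp
    then show ?thesis by (subst (asm) integrable_distr_eq) auto
  qed
  have ig1: "integrable M (\<lambda>y. norm (g (T0 y)))"
  proof (rule Bochner_Integration.integrable_bound)
    show "integrable M (\<lambda>y. 1 + (norm (g (T0 y)))\<^sup>2)" using ig2 by simp
    show "(\<lambda>y. norm (g (T0 y))) \<in> borel_measurable M" by measurable
    show "AE y in M. norm (norm (g (T0 y))) \<le> norm (1 + (norm (g (T0 y)))\<^sup>2)"
    proof (rule AE_I2)
      fix y
      have "0 \<le> (norm (g (T0 y)) - 1)\<^sup>2" by simp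
      then show "norm (norm (g (T0 y))) \<le> norm (1 + (norm (g (T0 y)))\<^sup>2)"
        by (simp add: power2_diff) (smt (verit) norm_ge_zero zero_le_power2)
    qed
  qed
  have T0_in: "T0 y \<in> \<Omega>" if "y \<in> \<Omega>" for y using T0_maps that by auto
  define a where "a y = (norm (T0 y))\<^sup>2 + (norm (g (T0 y)))\<^sup>2" for y
  define b where "b x = (norm x)\<^sup>2 + (norm (f x))\<^sup>2" for x
  define \<psi> where "\<psi> y \<tau> = T0 y \<bullet> s y \<tau> + g (T0 y) \<bullet> f (s y \<tau>)" for y \<tau>
  define \<psi>' where "\<psi>' y \<tau> = T0 y \<bullet> V (s y \<tau>) + g (T0 y) \<bullet> W (s y \<tau>)" for y \<tau>
  define G where "G y = BO * Cv + norm (g (T0 y)) * (Cd * Cv)" for y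
  define K where "K = integral\<^sup>L M a + integral\<^sup>L M b"
  have bR[measurable]: "b \<in> borel_measurable R" unfolding b_def by measurable
  have b_bnd: "norm (b x) \<le> BO\<^sup>2 + Bf\<^sup>2" if "x \<in> \<Omega>" for x
  proof -
    have "(norm x)\<^sup>2 \<le> BO\<^sup>2" using BO that by (intro power_mono) auto
    moreover have "(norm (f x))\<^sup>2 \<le> Bf\<^sup>2" using Bf that by (intro power_mono) auto
    ultimately show ?thesis unfolding b_def by simp
  qed
  have int_a: "integrable M a"
  proof -
    have "integrable M (\<lambda>y. (norm (T0 y))\<^sup>2)"
    proof (rule P.integrable_const_bound[where B="BO\<^sup>2"])
      show "AE y in M. norm ((norm (T0 y))\<^sup>2) \<le> BO\<^sup>2"
        using BO T0_in spM by (intro AE_I2) (auto intro!: power_mono)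
      show "(\<lambda>y. (norm (T0 y))\<^sup>2) \<in> borel_measurable M" by (rule toM) measurable
    qed
    then show ?thesis unfolding a_def using ig2 by simp
  qed
  have int_b: "integrable M b"
    by (rule P.integrable_const_bound[where B="BO\<^sup>2 + Bf\<^sup>2"])
       (use b_bnd spM toM[OF bR] in auto)

  have int_bs: "integrable M (\<lambda>y. b (s y \<tau>))" if tau: "\<tau> \<ge> 0" for \<tau>
  proof -
    note sRt[measurable] = sR[OF tau]
    show ?thesis
      by (rule P.integrable_const_bound[where B="BO\<^sup>2 + Bf\<^sup>2"])
         (use b_bnd spM s_maps tau in auto, rule toM, measurable)
  qed
  have int_psi: "integrable M (\<lambda>y. \<psi> y \<tau>)" if tau: "\<tau> \<ge> 0" for \<tau>
  proof -
    note sRt[measurable] = sR[OF tau]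
    have i1: "integrable M (\<lambda>y. T0 y \<bullet> s y \<tau>)"
    proof (rule P.integrable_const_bound[where B="BO * BO"])
      show "AE y in M. norm (T0 y \<bullet> s y \<tau>) \<le> BO * BO"
      proof (rule AE_I2)
        fix y assume "y \<in> space M"
        then have y: "y \<in> \<Omega>" using spM by simp
        have "norm (T0 y \<bullet> s y \<tau>) \<le> norm (T0 y) * norm (s y \<tau>)" using Cauchy_Schwarz_ineq2 by simp
        also have "\<dots> \<le> BO * BO" using BO T0_in[OF y] s_maps y tau by (intro mult_mono) auto
        finally show "norm (T0 y \<bullet> s y \<tau>) \<le> BO * BO" .
      qed
      show "(\<lambda>y. T0 y \<bullet> s y \<tau>) \<in> borel_measurable M" by (rule toM) measurable
    qed
    have i2: "integrable M (\<lambda>y. g (T0 y) \<bullet> f (s y \<tau>))"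
    proof (rule Bochner_Integration.integrable_bound)
      show "integrable M (\<lambda>y. norm (g (T0 y)) * Bf)" using ig1 by simp
      show "(\<lambda>y. g (T0 y) \<bullet> f (s y \<tau>)) \<in> borel_measurable M" by (rule toM) measurable
      show "AE y in M. norm (g (T0 y) \<bullet> f (s y \<tau>)) \<le> norm (norm (g (T0 y)) * Bf)"
      proof (rule AE_I2)
        fix y assume "y \<in> space M"
        then have y: "y \<in> \<Omega>" using spM by simp
        have "norm (g (T0 y) \<bullet> f (s y \<tau>)) \<le> norm (g (T0 y)) * norm (f (s y \<tau>))"
          using Cauchy_Schwarz_ineq2 by simp
        also have "\<dots> \<le> norm (g (T0 y)) * Bf" using Bf s_maps y tau by (intro mult_left_mono) auto
        also have "\<dots> = norm (norm (g (T0 y)) * Bf)" using Bf by simp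
        finally show "norm (g (T0 y) \<bullet> f (s y \<tau>)) \<le> norm (norm (g (T0 y)) * Bf)" .
      qed
    qed
    show ?thesis unfolding \<psi>_def using i1 i2 by simp
  qed
  have E_eq: "energy \<Omega> \<mu> f g (\<lambda>x. T0 (sinv x \<tau>)) = K - 2 * integral\<^sup>L M (\<lambda>y. \<psi> y \<tau>)"
    if tau: "\<tau> \<ge> 0" for \<tau>
  proof -
    note sRt[measurable] = sR[OF tau] and sinvRt[measurable] = sinvR[OF tau]
    define e where "e x = (norm (T0 (sinv x \<tau>) - x))\<^sup>2 + (norm (g (T0 (sinv x \<tau>)) - f x))\<^sup>2" for x
    have eR[measurable]: "e \<in> borel_measurable R" unfolding e_def by measurable
    have sM: "(\<lambda>x. s x \<tau>) \<in> measurable M M" by (rule toMM[OF sRt])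
    have pushM: "distr M M (\<lambda>x. s x \<tau>) = M" using s_push tau unfolding M_def by simp
    have "energy \<Omega> \<mu> f g (\<lambda>x. T0 (sinv x \<tau>)) = set_lebesgue_integral lborel \<Omega> (\<lambda>x. e x * \<mu> x)"
      unfolding energy_def e_def ..
    also have "\<dots> = integral\<^sup>L M e"
      unfolding M_def by (rule set_int_dens[OF Om_sets]) (use eR muR mu_pos in \<open>auto simp: R_def less_imp_le\<close>)
    also have "\<dots> = integral\<^sup>L M (\<lambda>y. e (s y \<tau>))" by (rule int_push[OF pushM sM toM[OF eR]])
    also have "\<dots> = integral\<^sup>L M (\<lambda>y. a y + b (s y \<tau>) - 2 * \<psi> y \<tau>)"
    proof (rule Bochner_Integration.integral_cong[OF refl])
      fix y assume "y \<in> space M"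
      then have y: "y \<in> \<Omega>" using spM by simp
      show "e (s y \<tau>) = a y + b (s y \<tau>) - 2 * \<psi> y \<tau>"
        unfolding e_def a_def b_def \<psi>_def using sinv_left y tau by (simp add: norm_diff_sq algebra_simps)
    qed
    also have "\<dots> = integral\<^sup>L M a + integral\<^sup>L M (\<lambda>y. b (s y \<tau>)) - 2 * integral\<^sup>L M (\<lambda>y. \<psi> y \<tau>)"
      using int_a int_bs[OF tau] int_psi[OF tau] by simp
    also have "integral\<^sup>L M (\<lambda>y. b (s y \<tau>)) = integral\<^sup>L M b"
      by (rule int_push[OF pushM sM toM[OF bR], symmetric])
    finally show ?thesis unfolding K_def by simp
  qed

  have Dpsi: "((\<lambda>\<tau>. \<psi> y \<tau>) has_real_derivative \<psi>' y \<tau>) (at \<tau> within {0..})"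
    if y: "y \<in> \<Omega>" and tau: "\<tau> \<ge> 0" for y \<tau>
  proof -
    have ds: "((\<lambda>\<tau>. s y \<tau>) has_vector_derivative V (s y \<tau>)) (at \<tau> within {0..})"
      using s_ode y tau unfolding V_def by simp
    have sy: "s y \<tau> \<in> \<Omega>" using s_maps y tau by simp
    have df: "(f has_derivative Df (s y \<tau>)) (at (s y \<tau>) within (\<lambda>\<tau>. s y \<tau>) ` {0..})"
      using hasDf[OF sy] by (rule has_derivative_at_withinI)
    have dfs: "((f \<circ> (\<lambda>\<tau>. s y \<tau>)) has_vector_derivative W (s y \<tau>)) (at \<tau> within {0..})"
      unfolding W_def using vector_derivative_diff_chain_within[OF ds df] .
    have d1: "((\<lambda>\<tau>. T0 y \<bullet> s y \<tau>) has_real_derivative T0 y \<bullet> V (s y \<tau>)) (at \<tau> within {0..})"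
      by (rule hvd_inner_const[OF ds])
    have d2: "((\<lambda>\<tau>. g (T0 y) \<bullet> (f \<circ> (\<lambda>\<tau>. s y \<tau>)) \<tau>) has_real_derivative g (T0 y) \<bullet> W (s y \<tau>))
        (at \<tau> within {0..})"
      by (rule hvd_inner_const[OF dfs])
    show ?thesis unfolding \<psi>_def \<psi>'_def using DERIV_add[OF d1 d2] by (simp add: comp_def)
  qed
  have psi'_bnd: "\<bar>\<psi>' y \<tau>\<bar> \<le> G y" if y: "y \<in> \<Omega>" and tau: "\<tau> \<ge> 0" for y \<tau>
  proof -
    have sy: "s y \<tau> \<in> \<Omega>" using s_maps y tau by simp
    have "\<bar>T0 y \<bullet> V (s y \<tau>)\<bar> \<le> norm (T0 y) * norm (V (s y \<tau>))" by (rule Cauchy_Schwarz_ineq2)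
    also have "\<dots> \<le> BO * Cv" using BO Cv T0_in[OF y] sy by (intro mult_mono) auto
    finally have 1: "\<bar>T0 y \<bullet> V (s y \<tau>)\<bar> \<le> BO * Cv" .
    have "\<bar>g (T0 y) \<bullet> W (s y \<tau>)\<bar> \<le> norm (g (T0 y)) * norm (W (s y \<tau>))" by (rule Cauchy_Schwarz_ineq2)
    also have "\<dots> \<le> norm (g (T0 y)) * (Cd * Cv)" using W_bnd[OF sy] by (intro mult_left_mono) auto
    finally have 2: "\<bar>g (T0 y) \<bullet> W (s y \<tau>)\<bar> \<le> norm (g (T0 y)) * (Cd * Cv)" .
    show ?thesis unfolding \<psi>'_def G_def using 1 2 by linarith
  qed
  have int_G: "integrable M G" unfolding G_def using ig1 by simp
  note stR[measurable] = sR[OF t_nonneg] and sinvtR[measurable] = sinvR[OF t_nonneg]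
  have psi'_meas: "(\<lambda>y. \<psi>' y t) \<in> borel_measurable M"
    unfolding \<psi>'_def by (rule toM) measurable
  have DPsi: "((\<lambda>\<tau>. integral\<^sup>L M (\<lambda>y. \<psi> y \<tau>)) has_real_derivative integral\<^sup>L M (\<lambda>y. \<psi>' y t))
      (at t within {0..})"
    by (rule deriv_under_integral[where F=\<psi> and F'=\<psi>' and G=G])
       (use int_psi Dpsi psi'_bnd int_G psi'_meas t_nonneg spM in auto)
  have grad_xi: "grad (\<lambda>y. f y $ i) x \<bullet> \<xi> x = Df x (\<xi> x) $ i" if x: "x \<in> \<Omega>" for x i
  proof -
    have "((\<lambda>y. f y $ i) has_derivative (\<lambda>h. Df x h $ i)) (at x)"
      using bounded_linear.has_derivative[OF bounded_linear_vec_nth hasDf[OF x]] .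
    then have fd: "frechet_derivative (\<lambda>y. f y $ i) (at x) = (\<lambda>h. Df x h $ i)"
      using frechet_derivative_at by metis
    have "grad (\<lambda>y. f y $ i) x \<bullet> \<xi> x = (\<Sum>b\<in>Basis. (Df x b $ i) * (b \<bullet> \<xi> x))"
      unfolding grad_def fd by (simp add: inner_sum_left)
    also have "\<dots> = (\<Sum>b\<in>Basis. (\<xi> x \<bullet> b) *\<^sub>R Df x b) $ i"
      by (simp add: vec_sum_nth inner_commute mult.commute)
    also have "\<dots> = Df x (\<xi> x) $ i" using repDf[OF x, of "\<xi> x"] by simp
    finally show ?thesis .
  qed
  define k2 where "k2 x = 2 * (T0 (sinv x t) \<bullet> \<xi> x + g (T0 (sinv x t)) \<bullet> Df x (\<xi> x))" for x
  have k_eq: "(2 *\<^sub>R T0 (sinv x t) + 2 *\<^sub>R (\<Sum>i\<in>UNIV. (g (T0 (sinv x t)) $ i) *\<^sub>R grad (\<lambda>y. f y $ i) x)) \<bullet> \<xi> x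
      = k2 x" if x: "x \<in> \<Omega>" for x
    unfolding k2_def using grad_xi[OF x]
    by (simp add: inner_add_left inner_sum_left inner_vec_def algebra_simps sum_distrib_left)
  have RHS: "set_lebesgue_integral lborel \<Omega>
          (\<lambda>x. (2 *\<^sub>R T0 (sinv x t)
                + 2 *\<^sub>R (\<Sum>i\<in>UNIV. (g (T0 (sinv x t)) $ i) *\<^sub>R grad (\<lambda>y. f y $ i) x)) \<bullet> \<xi> x)
      = 2 * integral\<^sup>L M (\<lambda>y. \<psi>' y t)"
  proof -
    have k2R[measurable]: "(\<lambda>x. k2 x / \<mu> x) \<in> borel_measurable R" unfolding k2_def by measurable
    have sM: "(\<lambda>x. s x t) \<in> measurable M M" by (rule toMM[OF stR])
    have pushM: "distr M M (\<lambda>x. s x t) = M" using s_push t_nonneg unfolding M_def by simp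
    have "set_lebesgue_integral lborel \<Omega>
          (\<lambda>x. (2 *\<^sub>R T0 (sinv x t)
                + 2 *\<^sub>R (\<Sum>i\<in>UNIV. (g (T0 (sinv x t)) $ i) *\<^sub>R grad (\<lambda>y. f y $ i) x)) \<bullet> \<xi> x)
        = set_lebesgue_integral lborel \<Omega> (\<lambda>x. (k2 x / \<mu> x) * \<mu> x)"
    proof (rule set_lebesgue_integral_cong[OF Om_sets], intro allI impI)
      fix x assume x: "x \<in> \<Omega>"
      then have "\<mu> x \<noteq> 0" using mu_pos by force
      then show "(2 *\<^sub>R T0 (sinv x t)
                + 2 *\<^sub>R (\<Sum>i\<in>UNIV. (g (T0 (sinv x t)) $ i) *\<^sub>R grad (\<lambda>y. f y $ i) x)) \<bullet> \<xi> x
          = (k2 x / \<mu> x) * \<mu> x" using k_eq[OF x] by simp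
    qed
    also have "\<dots> = integral\<^sup>L M (\<lambda>x. k2 x / \<mu> x)" unfolding M_def
      by (rule set_int_dens[OF Om_sets]) (use k2R muR mu_pos in \<open>auto simp: R_def less_imp_le\<close>)
    also have "\<dots> = integral\<^sup>L M (\<lambda>y. k2 (s y t) / \<mu> (s y t))"
      by (rule int_push[OF pushM sM toM[OF k2R]])
    also have "\<dots> = integral\<^sup>L M (\<lambda>y. 2 * \<psi>' y t)"
    proof (rule Bochner_Integration.integral_cong[OF refl])
      fix y assume "y \<in> space M"
      then have y: "y \<in> \<Omega>" using spM by simp
      have sy: "s y t \<in> \<Omega>" using s_maps y t_nonneg by simp
      have W: "W (s y t) = (1 / \<mu> (s y t)) *\<^sub>R Df (s y t) (\<xi> (s y t))"
        unfolding W_def V_def by (rule linear_cmul[OF linDf[OF sy]])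
      show "k2 (s y t) / \<mu> (s y t) = 2 * \<psi>' y t"
        unfolding k2_def \<psi>'_def W V_def using sinv_left y t_nonneg
        by (simp add: add_divide_distrib)
    qed
    also have "\<dots> = 2 * integral\<^sup>L M (\<lambda>y. \<psi>' y t)" by simp
    finally show ?thesis .
  qed
  have D2: "((\<lambda>\<tau>. K - 2 * integral\<^sup>L M (\<lambda>y. \<psi> y \<tau>)) has_real_derivative
      (- (2 * integral\<^sup>L M (\<lambda>y. \<psi>' y t)))) (at t within {0..})"
    using DERIV_diff[OF DERIV_const DERIV_cmult[OF DPsi, of 2]] by simp
  have D3: "((\<lambda>\<tau>. energy \<Omega> \<mu> f g (\<lambda>x. T0 (sinv x \<tau>))) has_real_derivative
      (- (2 * integral\<^sup>L M (\<lambda>y. \<psi>' y t)))) (at t within {0..})"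
    by (rule has_field_derivative_transform_within[OF D2, of 1]) (use E_eq t_nonneg in auto)
  show ?thesis using D3 RHS by simp
qed

end
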